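(* For every $n\ge2$, in the matching market with $n$ agents and $n$ items, every deterministic truthful non-bossy mechanism has rank-approximation factor at least $n-1$.
   Context: Matching market: $n$ agents and $m$ items (here $m=n$); each agent $j$ reports any strict total order $\succ_j$ on the items. An outcome is a matching; an unmatched agent receives the null item, ranked below every item. A deterministic mechanism maps each profile to a matching. It is truthful if for every agent $j$, $\succ_{-j}$, and $\succ_j,\succ'_j$, the item $j$ receives under $(\succ_j,\succ_{-j})$ is weakly preferred under $\succ_j$ to the item $j$ receives under $(\succ'_j,\succ_{-j})$. It is non-bossy if whenever an agent changes his reported order and his own allocated item stays the same, the whole output matching stays the same. $\mathrm{rank}_i(M;\succ)$ is the number of agents assigned one of their top-$i$ items by $M$, $\mathrm{maxrank}_i(\succ)$ its maximum over matchings; a mechanism has rank-approximation factor $\alpha$ if on every profile its output satisfies $\mathrm{rank}_i\ge\mathrm{maxrank}_i/\alpha$ for all $i$ (so a mechanism has factor smaller than $\alpha$ only if this holds for some value below $\alpha$). *)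

theory Defs
  imports Complex_Main
begin

text \<open>A preference order of an agent is a list
  enumerating all n items, most preferred first (a strict total order on the items).
  An outcome is a list of length n; entry j is Some a (agent j gets item a) or
  None (agent j gets the null item, ranked below all items).\<close>

definition valid_pref :: "nat \<Rightarrow> nat list \<Rightarrow> bool" where
  "valid_pref n l \<longleftrightarrow> distinct l \<and> set l = {0..<n}"

definition valid_profile :: "nat \<Rightarrow> nat list list \<Rightarrow> bool" where
  "valid_profile n P \<longleftrightarrow> length P = n \<and> (\<forall>j<n. valid_pref n (P ! j))"

definition is_matching :: "nat \<Rightarrow> nat option list \<Rightarrow> bool" where
  "is_matching n M \<longleftrightarrow> length M = n
     \<and> (\<forall>j<n. \<forall>a. M ! j = Some a \<longrightarrow> a < n)
     \<and> (\<forall>j<n. \<forall>k<n. \<forall>a. j \<noteq> k \<and> M ! j = Some a \<longrightarrow> M ! k \<noteq> Some a)"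

text \<open>Position (0-based) of an item in a preference list (0 = most preferred).\<close>
fun index :: "nat list \<Rightarrow> nat \<Rightarrow> nat" where
  "index [] a = 0"
| "index (x # xs) a = (if x = a then 0 else Suc (index xs a))"

fun pos :: "nat list \<Rightarrow> nat option \<Rightarrow> nat" where
  "pos l None = length l"
| "pos l (Some a) = index l a"

definition weakly_prefers :: "nat list \<Rightarrow> nat option \<Rightarrow> nat option \<Rightarrow> bool" where
  "weakly_prefers l x y \<longleftrightarrow> pos l x \<le> pos l y"

type_synonym mechanism = "nat list list \<Rightarrow> nat option list"

definition is_mechanism :: "nat \<Rightarrow> mechanism \<Rightarrow> bool" where
  "is_mechanism n f \<longleftrightarrow> (\<forall>P. valid_profile n P \<longrightarrow> is_matching n (f P))"

definition truthful :: "nat \<Rightarrow> mechanism \<Rightarrow> bool" where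
  "truthful n f \<longleftrightarrow> (\<forall>P j l'. valid_profile n P \<and> j < n \<and> valid_pref n l' \<longrightarrow>
      weakly_prefers (P ! j) (f P ! j) (f (P[j := l']) ! j))"

definition non_bossy :: "nat \<Rightarrow> mechanism \<Rightarrow> bool" where
  "non_bossy n f \<longleftrightarrow> (\<forall>P j l'. valid_profile n P \<and> j < n \<and> valid_pref n l' \<longrightarrow>
      f (P[j := l']) ! j = f P ! j \<longrightarrow> f (P[j := l']) = f P)"

definition rank_i :: "nat \<Rightarrow> nat \<Rightarrow> nat option list \<Rightarrow> nat list list \<Rightarrow> nat" where
  "rank_i n i M P = card {j. j < n \<and> (\<exists>a. M ! j = Some a \<and> index (P ! j) a < i)}"

definition maxrank_i :: "nat \<Rightarrow> nat \<Rightarrow> nat list list \<Rightarrow> nat" where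
  "maxrank_i n i P = Max {rank_i n i M P | M. is_matching n M}"

definition has_rank_factor :: "nat \<Rightarrow> mechanism \<Rightarrow> real \<Rightarrow> bool" where
  "has_rank_factor n f \<alpha> \<longleftrightarrow> \<alpha> > 0 \<and>
     (\<forall>P i. valid_profile n P \<longrightarrow> real (rank_i n i (f P) P) \<ge> real (maxrank_i n i P) / \<alpha>)"

end

theory Submission
  imports Defs
begin

lemma index_le: "index l a \<le> length l" by (induct l) auto
lemma index_less: "a \<in> set l \<Longrightarrow> index l a < length l" by (induct l) auto
lemma index_nth: "distinct l \<Longrightarrow> k < length l \<Longrightarrow> index l (l!k) = k"
proof (induct l arbitrary: k)
  case Nil then show ?case by simp
next
  case (Cons x xs) then show ?case by (cases k) (auto simp: nth_mem)
qed
lemma index_upt: "b < n \<Longrightarrow> index [0..<n] b = b"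
  using index_nth[of "[0..<n]" b] by simp

lemma pos_le_None: "pos l z \<le> pos l None"
  by (cases z) (auto simp: index_le)

lemma valid_len: "valid_pref n l \<Longrightarrow> length l = n"
  unfolding valid_pref_def using distinct_card by fastforce

lemma index_inj: "a \<in> set l \<Longrightarrow> b \<in> set l \<Longrightarrow> index l a = index l b \<Longrightarrow> a = b"
  by (induct l) (auto split: if_splits)

lemma pos_inj:
  assumes "valid_pref n l" "\<forall>a. z1 = Some a \<longrightarrow> a < n" "\<forall>a. z2 = Some a \<longrightarrow> a < n"
    "pos l z1 = pos l z2"
  shows "z1 = z2"
proof -
  have L: "length l = n" using assms(1) valid_len by blast
  have S: "set l = {0..<n}" using assms(1) valid_pref_def by blast
  show ?thesis
  proof (cases z1)
    case None
    show ?thesis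
    proof (cases z2)
      case (Some b)
      then have "b \<in> set l" using assms(3) S by simp
      then have "index l b < n" using index_less L by metis
      then show ?thesis using None Some assms(4) L by simp
    qed (use None in simp)
  next
    case (Some a)
    then have a: "a \<in> set l" using assms(2) S by simp
    show ?thesis
    proof (cases z2)
      case None
      have "index l a < n" using a index_less L by metis
      then show ?thesis using None Some assms(4) L by simp
    next
      case (Some b)
      then have "b \<in> set l" using assms(3) S by simp
      then show ?thesis using a Some \<open>z1 = Some a\<close> assms(4) index_inj by simp
    qed
  qed
qed

lemma mono_lemma:
  assumes mech: "is_mechanism n f" and tr: "truthful n f" and nb: "non_bossy n f"
    and vp: "valid_profile n P" and j: "j < n" and vl: "valid_pref n l'"
    and cond: "\<forall>z. pos l' z \<le> pos l' (f P ! j) \<longrightarrow> pos (P!j) z \<le> pos (P!j) (f P ! j)"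
  shows "f (P[j:=l']) = f P"
proof -
  define Q where "Q = P[j:=l']"
  have len: "length P = n" using vp valid_profile_def by auto
  have vp': "valid_profile n Q" using vp vl j unfolding valid_profile_def Q_def
    by (auto simp: nth_list_update)
  have vj: "valid_pref n (P!j)" using vp j valid_profile_def by auto
  have 1: "pos (P!j) (f P ! j) \<le> pos (P!j) (f Q ! j)"
    using tr vp j vl unfolding truthful_def weakly_prefers_def Q_def by blast
  have bk: "Q[j := P!j] = P" using len j Q_def by simp
  have nj: "Q ! j = l'" using len j Q_def by simp
  have "weakly_prefers (Q!j) (f Q ! j) (f (Q[j:=P!j]) ! j)"
    using tr vp' j vj unfolding truthful_def by blast
  hence 2: "pos l' (f Q ! j) \<le> pos l' (f P ! j)"
    using bk nj unfolding weakly_prefers_def by simp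
  have 3: "pos (P!j) (f Q ! j) \<le> pos (P!j) (f P ! j)" using cond 2 by blast
  have m1: "is_matching n (f P)" and m2: "is_matching n (f Q)"
    using mech vp vp' is_mechanism_def by auto
  have r1: "\<forall>a. f P ! j = Some a \<longrightarrow> a < n" using m1 j unfolding is_matching_def by blast
  have r2: "\<forall>a. f Q ! j = Some a \<longrightarrow> a < n" using m2 j unfolding is_matching_def by blast
  have eq: "f Q ! j = f P ! j"
    using pos_inj[OF vj r2 r1] 1 3 by linarith
  show ?thesis using nb vp j vl eq unfolding non_bossy_def Q_def by blast
qed

definition Lp :: "nat \<Rightarrow> nat \<Rightarrow> nat list" where
  "Lp n y = (y-1) # y # filter (\<lambda>x. x \<noteq> y-1 \<and> x \<noteq> y) [0..<n]"
definition Hp :: "nat \<Rightarrow> nat \<Rightarrow> nat list" where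
  "Hp n h = h # filter (\<lambda>x. x \<noteq> h) [0..<n]"

lemma valid_Lp: "1 \<le> y \<Longrightarrow> y < n \<Longrightarrow> valid_pref n (Lp n y)"
  unfolding valid_pref_def Lp_def by auto
lemma valid_Hp: "h < n \<Longrightarrow> valid_pref n (Hp n h)"
  unfolding valid_pref_def Hp_def by auto

lemma cond_Lp:
  assumes "1 \<le> y" "y < n" "2 \<le> n"
  shows "\<forall>z. pos (Lp n y) z \<le> pos (Lp n y) (Some y) \<longrightarrow> pos [0..<n] z \<le> pos [0..<n] (Some y)"
proof (intro allI impI)
  fix z assume a: "pos (Lp n y) z \<le> pos (Lp n y) (Some y)"
  have py: "pos (Lp n y) (Some y) = 1" using assms by (simp add: Lp_def)
  have ln: "length (Lp n y) = n" using valid_len valid_Lp assms by blast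
  show "pos [0..<n] z \<le> pos [0..<n] (Some y)"
  proof (cases z)
    case None then show ?thesis using a py ln assms by simp
  next
    case (Some b)
    have "b = y - 1 \<or> b = y" using a py Some by (auto simp: Lp_def split: if_splits)
    then show ?thesis using Some assms index_upt[of b n] index_upt[of y n] by auto
  qed
qed


lemma index_hd: "l \<noteq> [] \<Longrightarrow> index l (hd l) = 0"
  by (cases l) auto

lemma rank_le: "rank_i n i M P \<le> n"
proof -
  have "rank_i n i M P \<le> card {0..<n}" unfolding rank_i_def
    by (rule card_mono) auto
  then show ?thesis by simp
qed

lemma maxrank_ge_rank:
  assumes "is_matching n M" shows "rank_i n i M P \<le> maxrank_i n i P"
proof -
  have fin: "finite {rank_i n i M P | M. is_matching n M}"
    by (rule finite_subset[of _ "{..n}"]) (auto simp: rank_le)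
  show ?thesis unfolding maxrank_i_def using assms by (intro Max_ge[OF fin]) auto
qed

lemma maxrank_ge:
  assumes vp: "valid_profile n Q" and n: "1 \<le> n"
  shows "card ((\<lambda>j. hd (Q!j)) ` {0..<n}) \<le> maxrank_i n 1 Q"
proof -
  define sel where "sel a = (SOME j. j < n \<and> hd (Q!j) = a)" for a
  define M where "M = map (\<lambda>j. if sel (hd (Q!j)) = j then Some (hd (Q!j)) else None) [0..<n]"
  have ne: "\<And>j. j<n \<Longrightarrow> Q!j \<noteq> [] \<and> set (Q!j) = {0..<n}"
    using vp n unfolding valid_profile_def valid_pref_def by fastforce
  have hdlt: "\<And>j. j<n \<Longrightarrow> hd (Q!j) < n"
    using ne hd_in_set by fastforce
  have mM: "is_matching n M" unfolding is_matching_def M_def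
    by (auto simp: hdlt)
  have rk: "rank_i n 1 M Q = card {j. j<n \<and> sel (hd (Q!j)) = j}"
    unfolding rank_i_def M_def
    by (rule arg_cong[where f=card]) (auto simp: index_hd ne split: if_splits)
  have img: "(\<lambda>j. hd (Q!j)) ` {0..<n} \<subseteq> (\<lambda>j. hd (Q!j)) ` {j. j<n \<and> sel (hd (Q!j)) = j}"
  proof
    fix a assume "a \<in> (\<lambda>j. hd (Q!j)) ` {0..<n}"
    then obtain j0 where j0: "j0 < n" "a = hd (Q!j0)" by auto
    have "sel a < n \<and> hd (Q!(sel a)) = a"
      unfolding sel_def by (rule someI[of _ j0]) (use j0 in auto)
    then show "a \<in> (\<lambda>j. hd (Q!j)) ` {j. j<n \<and> sel (hd (Q!j)) = j}"
      by (intro image_eqI[of _ _ "sel a"]) auto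
  qed
  have "card ((\<lambda>j. hd (Q!j)) ` {0..<n}) \<le> card ((\<lambda>j. hd (Q!j)) ` {j. j<n \<and> sel (hd (Q!j)) = j})"
    by (rule card_mono[OF _ img]) auto
  also have "\<dots> \<le> card {j. j<n \<and> sel (hd (Q!j)) = j}" by (rule card_image_le) auto
  also have "\<dots> = rank_i n 1 M Q" using rk by simp
  also have "\<dots> \<le> maxrank_i n 1 Q" by (rule maxrank_ge_rank[OF mM])
  finally show ?thesis .
qed


theorem theorem8:
  fixes n :: nat and f :: mechanism and \<alpha> :: real
  assumes "n \<ge> 2"
    and "is_mechanism n f"
    and "truthful n f"
    and "non_bossy n f"
    and "has_rank_factor n f \<alpha>"
  shows "\<alpha> \<ge> real n - 1"
proof -
  note n2 = assms(1) and mech = assms(2) and tr = assms(3) and nb = assms(4) and hr = assms(5)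
  define R where "R = [0..<n]"
  have vR: "valid_pref n R" unfolding R_def valid_pref_def by simp
  define P0 where "P0 = map (\<lambda>j. R) [0..<n]"
  have vP0: "valid_profile n P0" unfolding P0_def valid_profile_def using vR by simp
  define M where "M = f P0"
  have mM: "is_matching n M" using mech vP0 M_def is_mechanism_def by blast
  have Mlt: "\<And>j a. j < n \<Longrightarrow> M!j = Some a \<Longrightarrow> a < n" using mM is_matching_def by blast
  have Minj: "\<And>j k a. j < n \<Longrightarrow> k < n \<Longrightarrow> M!j = Some a \<Longrightarrow> M!k = Some a \<Longrightarrow> j = k"
    using mM unfolding is_matching_def by blast
  define A where "A = {j. j<n \<and> (\<exists>y. M!j = Some y \<and> y \<noteq> 0)}"
  define U where "U = {j. j<n \<and> M!j = None}"
  define Z where "Z = {j. j<n \<and> M!j = Some 0}"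
  define t where "t j = the (M!j) - 1" for j
  have injt: "inj_on t A"
  proof (rule inj_onI)
    fix j k assume j: "j \<in> A" and k: "k \<in> A" and e: "t j = t k"
    then obtain y y' where "M!j = Some y" "y \<noteq> 0" "M!k = Some y'" "y' \<noteq> 0" "j<n" "k<n"
      unfolding A_def by auto
    moreover then have "y = y'" using e unfolding t_def by simp
    ultimately show "j = k" using Minj by blast
  qed
  have tA: "t ` A \<subseteq> {0..<n}"
    unfolding A_def t_def using Mlt by fastforce
  have finA: "finite A" and finU: "finite U" and finZ: "finite Z"
    unfolding A_def U_def Z_def by auto
  have part: "{0..<n} = A \<union> U \<union> Z" unfolding A_def U_def Z_def
    by auto
  have "card {0..<n} = card A + card U + card Z"
    unfolding part
    by (subst card_Un_disjoint, use finA finU finZ in \<open>auto simp: A_def U_def Z_def\<close>)+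
  then have cpart: "card A + card U + card Z = n" by simp
  have cZ: "card Z \<le> 1"
    using card_le_Suc0_iff_eq[OF finZ] Minj unfolding Z_def by auto
  define C where "C = {0..<n} - t ` A"
  have cC: "card C = n - card A"
    unfolding C_def using card_Diff_subset[OF finite_imageI[OF finA] tA] card_image[OF injt] by simp
  have "card U \<le> card C" using cC cpart by linarith
  then obtain h where hU: "h ` U \<subseteq> C" and hinj: "inj_on h U"
    using card_le_inj[of U C] finU unfolding C_def by auto
  define g where "g j = (case M!j of None \<Rightarrow> Hp n (h j) | Some y \<Rightarrow> if y = 0 then R else Lp n y)" for j
  have vg: "valid_pref n (g j)" if "j < n" for j
  proof (cases "M!j")
    case None
    then have "j \<in> U" using that U_def by auto
    then have "h j < n" using hU C_def by auto
    then show ?thesis using None g_def valid_Hp by simp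
  next
    case (Some y)
    then show ?thesis using Mlt[OF that Some] vR valid_Lp[of y n] g_def by auto
  qed
  have condg: "\<forall>z. pos (g j) z \<le> pos (g j) (M!j) \<longrightarrow> pos R z \<le> pos R (M!j)" if "j < n" for j
  proof (cases "M!j")
    case None
    then show ?thesis using pos_le_None by simp
  next
    case (Some y)
    show ?thesis
    proof (cases "y = 0")
      case True then show ?thesis using Some g_def by simp
    next
      case False
      then show ?thesis using Some g_def cond_Lp[of y n] Mlt[OF that Some] n2 R_def by simp
    qed
  qed
  define PP where "PP k = map (\<lambda>j. if j<k then g j else R) [0..<n]" for k
  have vPP: "valid_profile n (PP k)" for k
    unfolding PP_def valid_profile_def using vg vR by simp
  have fPP: "k \<le> n \<Longrightarrow> f (PP k) = M" for k
  proof (induct k)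
    case 0
    have "PP 0 = P0" unfolding PP_def P0_def by simp
    then show ?case using M_def by simp
  next
    case (Suc k)
    then have k: "k < n" by simp
    have IH: "f (PP k) = M" using Suc by simp
    have upd: "PP (Suc k) = (PP k)[k := g k]"
      unfolding PP_def using k by (intro nth_equalityI) (auto simp: nth_list_update less_Suc_eq)
    have PPk: "PP k ! k = R" unfolding PP_def using k by simp
    have "f ((PP k)[k := g k]) = f (PP k)"
      by (rule mono_lemma[OF mech tr nb vPP k vg[OF k]]) (use condg[OF k] PPk IH in simp)
    then show ?case using upd IH by simp
  qed
  define Q where "Q = PP n"
  have fQ: "f Q = M" using fPP Q_def by simp
  have Qj: "Q ! j = g j" if "j < n" for j using that Q_def PP_def by simp
  have vQ: "valid_profile n Q" using vPP Q_def by simp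
  have rk: "rank_i n 1 (f Q) Q \<le> 1"
  proof -
    have "{j. j < n \<and> (\<exists>a. M ! j = Some a \<and> index (Q ! j) a < 1)} \<subseteq> Z"
    proof
      fix j assume "j \<in> {j. j < n \<and> (\<exists>a. M ! j = Some a \<and> index (Q ! j) a < 1)}"
      then obtain a where j: "j < n" "M!j = Some a" "index (Q!j) a < 1" by auto
      show "j \<in> Z"
      proof (cases "a = 0")
        case True then show ?thesis using j Z_def by simp
      next
        case False
        have "a - Suc 0 \<noteq> a" using False by simp
        then have "index (Q!j) a = 1" using j Qj g_def False by (simp add: Lp_def)
        then show ?thesis using j by simp
      qed
    qed
    then have "card {j. j < n \<and> (\<exists>a. M ! j = Some a \<and> index (Q ! j) a < 1)} \<le> card Z"
      by (rule card_mono[OF finZ])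
    then show ?thesis using cZ fQ unfolding rank_i_def by simp
  qed
  have sub: "t ` A \<union> h ` U \<subseteq> (\<lambda>j. hd (Q!j)) ` {0..<n}"
  proof
    fix a assume "a \<in> t ` A \<union> h ` U"
    then show "a \<in> (\<lambda>j. hd (Q!j)) ` {0..<n}"
    proof
      assume "a \<in> t ` A"
      then obtain j y where "j < n" "M!j = Some y" "y \<noteq> 0" "a = t j" unfolding A_def by auto
      then show ?thesis using Qj g_def t_def by (intro image_eqI[of _ _ j]) (auto simp: Lp_def)
    next
      assume "a \<in> h ` U"
      then obtain j where "j < n" "M!j = None" "a = h j" unfolding U_def by auto
      then show ?thesis using Qj g_def by (intro image_eqI[of _ _ j]) (auto simp: Hp_def)
    qed
  qed
  have disj: "t ` A \<inter> h ` U = {}" using hU C_def by auto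
  have e: "card (t ` A \<union> h ` U) = card A + card U"
    using card_Un_disjoint[OF finite_imageI[OF finA] finite_imageI[OF finU] disj]
      card_image[OF injt] card_image[OF hinj] by simp
  have "card (t ` A \<union> h ` U) \<le> card ((\<lambda>j. hd (Q!j)) ` {0..<n})"
    by (rule card_mono[OF _ sub]) simp
  also have "\<dots> \<le> maxrank_i n 1 Q" using maxrank_ge[OF vQ] n2 by simp
  finally have mx: "card A + card U \<le> maxrank_i n 1 Q" using e by simp
  then have mx2: "n - 1 \<le> maxrank_i n 1 Q" using cpart cZ by linarith
  have apos: "\<alpha> > 0" using hr has_rank_factor_def by blast
  have ineq: "real (maxrank_i n 1 Q) / \<alpha> \<le> real (rank_i n 1 (f Q) Q)"
    using hr vQ has_rank_factor_def by blast
  have mxr: "real n - 1 \<le> real (maxrank_i n 1 Q)" using mx2 n2 by linarith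
  have "real (rank_i n 1 (f Q) Q) \<le> 1" using rk by simp
  then have "real (maxrank_i n 1 Q) / \<alpha> \<le> 1" using ineq by linarith
  then have "real (maxrank_i n 1 Q) \<le> \<alpha>" using apos by (simp add: divide_le_eq)
  then show ?thesis using mxr by linarith
qed

end
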